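(* For any $n\geq 1$ and any formulas $\psi_1,\dots,\psi_n$, $\mathbf{GLP}\nvdash\bigwedge_{i=1}^n([0]\psi_i\to\psi_i)\to\langle 0\rangle^{n+1}\top$.
   Context: $\mathbf{GLP}$ is the propositional polymodal logic with modalities $[0],[1],\dots$ ($\langle k\rangle:=\neg[k]\neg$) axiomatized by classical tautologies; $[k](\phi\to\psi)\to([k]\phi\to[k]\psi)$; $[k]([k]\phi\to\phi)\to[k]\phi$; $\langle j\rangle\phi\to[k]\langle j\rangle\phi$ for $j<k$; $[j]\phi\to[k]\phi$ for $j\leq k$; rules modus ponens and necessitation. $\langle 0\rangle^{n+1}$ denotes $n+1$ iterations of $\langle 0\rangle$. *)

theory Defs
  imports Main
begin

datatype fm = Bot | Var nat | Imp fm fm | Box nat fm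

definition Neg :: "fm \<Rightarrow> fm" where "Neg p = Imp p Bot"
definition Top :: fm where "Top = Neg Bot"
definition Or :: "fm \<Rightarrow> fm \<Rightarrow> fm" where "Or p q = Imp (Neg p) q"
definition And :: "fm \<Rightarrow> fm \<Rightarrow> fm" where "And p q = Neg (Imp p (Neg q))"
definition Dia :: "nat \<Rightarrow> fm \<Rightarrow> fm" where "Dia k p = Neg (Box k (Neg p))"

fun teval :: "(fm \<Rightarrow> bool) \<Rightarrow> fm \<Rightarrow> bool" where
  "teval v Bot = False"
| "teval v (Var p) = v (Var p)"
| "teval v (Imp p q) = (teval v p \<longrightarrow> teval v q)"
| "teval v (Box k p) = v (Box k p)"

definition tautology :: "fm \<Rightarrow> bool" where
  "tautology p \<longleftrightarrow> (\<forall>v. teval v p)"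

inductive GLP_prov :: "fm \<Rightarrow> bool" where
  taut: "tautology p \<Longrightarrow> GLP_prov p"
| K: "GLP_prov (Imp (Box k (Imp p q)) (Imp (Box k p) (Box k q)))"
| Loeb: "GLP_prov (Imp (Box k (Imp (Box k p) p)) (Box k p))"
| Ax3: "j < k \<Longrightarrow> GLP_prov (Imp (Dia j p) (Box k (Dia j p)))"
| Ax4: "j \<le> k \<Longrightarrow> GLP_prov (Imp (Box j p) (Box k p))"
| MP: "GLP_prov (Imp p q) \<Longrightarrow> GLP_prov p \<Longrightarrow> GLP_prov q"
| Nec: "GLP_prov p \<Longrightarrow> GLP_prov (Box k p)"

fun bigconj :: "fm list \<Rightarrow> fm" where
  "bigconj [] = Top"
| "bigconj [p] = p"
| "bigconj (p # q # ps) = And p (bigconj (q # ps))"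

end

theory Submission
  imports Defs
begin

fun sem :: "nat \<Rightarrow> fm \<Rightarrow> bool" where
  "sem w Bot = False"
| "sem w (Var p) = False"
| "sem w (Imp p q) = (sem w p \<longrightarrow> sem w q)"
| "sem w (Box 0 p) = (\<forall>u<w. sem u p)"
| "sem w (Box (Suc k) p) = True"

lemma teval_sem: "teval (sem w) p = sem w p"
  by (induction p) auto

lemma loeb_sem: "\<forall>u<w. (\<forall>v<u. sem v p) \<longrightarrow> sem u p \<Longrightarrow> \<forall>u<w. sem u p"
proof (induction w rule: less_induct)
  case (less w)
  then show ?case by (metis less_trans)
qed

lemma sound: "GLP_prov p \<Longrightarrow> sem w p"
proof (induction p arbitrary: w rule: GLP_prov.induct)
  case (taut p)
  then show ?case using teval_sem unfolding tautology_def by metis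
next
  case (K k p q)
  then show ?case by (cases k) auto
next
  case (Loeb k p)
  then show ?case using loeb_sem[of w p] by (cases k) auto
next
  case (Ax3 j k p)
  then show ?case by (cases k) auto
next
  case (Ax4 j k p)
  then show ?case by (cases k; cases j) auto
next
  case (MP p q)
  then show ?case by auto
next
  case (Nec p k)
  then show ?case by (cases k) auto
qed

lemma sem_bigconj: "sem w (bigconj xs) = (\<forall>x\<in>set xs. sem w x)"
  by (induction xs rule: bigconj.induct) (auto simp: Top_def Neg_def And_def)

lemma sem_Dia0: "sem w (Dia 0 p) = (\<exists>u<w. sem u p)"
  by (simp add: Dia_def Neg_def)

lemma sem_dia: "sem w ((Dia 0 ^^ m) Top) \<Longrightarrow> m \<le> w"
proof (induction m arbitrary: w)
  case 0
  then show ?case by simp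
next
  case (Suc m)
  have "sem w (Dia 0 ((Dia 0 ^^ m) Top))" using Suc.prems by simp
  then obtain u where "u < w" "sem u ((Dia 0 ^^ m) Top)"
    unfolding sem_Dia0 by blast
  with Suc.IH show ?case by fastforce
qed

theorem mainTheorem13:
  fixes n :: nat and \<psi> :: "nat \<Rightarrow> fm"
  assumes "n \<ge> 1"
  shows "\<not> GLP_prov (Imp (bigconj (map (\<lambda>i. Imp (Box 0 (\<psi> i)) (\<psi> i)) [1..<n+1]))
                          ((Dia 0 ^^ (n + 1)) Top))"
proof
  assume H: "GLP_prov (Imp (bigconj (map (\<lambda>i. Imp (Box 0 (\<psi> i)) (\<psi> i)) [1..<n+1]))
                          ((Dia 0 ^^ (n + 1)) Top))"
  define F where "F i = {w. w \<le> n \<and> \<not> sem w (Imp (Box 0 (\<psi> i)) (\<psi> i))}" for i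
  have fin: "finite (F i)" for i unfolding F_def by auto
  have c1: "card (F i) \<le> 1" for i
  proof -
    have "\<forall>x\<in>F i. \<forall>y\<in>F i. x = y"
    proof (intro ballI)
      fix x y assume "x \<in> F i" "y \<in> F i"
      then show "x = y" unfolding F_def
        by simp (metis linorder_neqE_nat)
    qed
    then show ?thesis using card_le_Suc0_iff_eq[OF fin] by simp
  qed
  have "card (\<Union>i\<in>{1..n}. F i) \<le> (\<Sum>i\<in>{1..n}. card (F i))"
    by (rule card_UN_le) simp
  also have "\<dots> \<le> n" using sum_bounded_above[of "{1..n}" "\<lambda>i. card (F i)" 1] c1 by simp
  finally have cU: "card (\<Union>i\<in>{1..n}. F i) < card {0..n}" by simp
  have "\<not> {0..n} \<subseteq> (\<Union>i\<in>{1..n}. F i)"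
  proof
    assume "{0..n} \<subseteq> (\<Union>i\<in>{1..n}. F i)"
    then have "card {0..n} \<le> card (\<Union>i\<in>{1..n}. F i)"
      by (intro card_mono) (auto simp: fin)
    with cU show False by simp
  qed
  then obtain w where w0: "w \<in> {0..n}" "w \<notin> (\<Union>i\<in>{1..n}. F i)" by blast
  then have w: "w \<le> n" "\<forall>i\<in>{1..n}. w \<notin> F i" by auto
  have "sem w (bigconj (map (\<lambda>i. Imp (Box 0 (\<psi> i)) (\<psi> i)) [1..<n+1]))"
    unfolding sem_bigconj using w unfolding F_def by auto
  then have "sem w ((Dia 0 ^^ (n + 1)) Top)" using sound[OF H, of w] by simp
  then have "n + 1 \<le> w" by (rule sem_dia)
  with w show False by simp
qed

end
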